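(* (1) For any group $(G,\cdot)$, setting $a\triangleright b=a^{-1}ba$ makes $(G,\cdot,\triangleright)$ a post-group. (2) For any two-step nilpotent group $(G,\cdot)$ and any integer $n\neq 0$, setting $a\triangleright b=a^{-n}ba^{n}$ makes $(G,\cdot,\triangleright)$ a post-group.
   Context: A post-group is a triple $(G,\cdot,\triangleright)$ with $(G,\cdot)$ a group and $\triangleright$ a binary operation such that for each $a$ the map $b\mapsto a\triangleright b$ is an automorphism of $(G,\cdot)$ and $a\triangleright(b\triangleright c)=(a\cdot(a\triangleright b))\triangleright c$ for all $a,b,c\in G$. A two-step nilpotent group is a group of nilpotency class at most $2$, i.e. all commutators $[a,b]=a^{-1}b^{-1}ab$ are central. *)

theory Defs
  imports "HOL-Algebra.Group"
begin

definition post_group :: "('a, 'b) monoid_scheme \<Rightarrow> ('a \<Rightarrow> 'a \<Rightarrow> 'a) \<Rightarrow> bool" where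
  "post_group G tri \<longleftrightarrow> group G \<and>
     (\<forall>a \<in> carrier G. tri a \<in> iso G G) \<and>
     (\<forall>a \<in> carrier G. \<forall>b \<in> carrier G. \<forall>c \<in> carrier G.
        tri a (tri b c) = tri (a \<otimes>\<^bsub>G\<^esub> tri a b) c)"

definition commutator :: "('a, 'b) monoid_scheme \<Rightarrow> 'a \<Rightarrow> 'a \<Rightarrow> 'a" where
  "commutator G a b = inv\<^bsub>G\<^esub> a \<otimes>\<^bsub>G\<^esub> inv\<^bsub>G\<^esub> b \<otimes>\<^bsub>G\<^esub> a \<otimes>\<^bsub>G\<^esub> b"

definition two_step_nilpotent :: "('a, 'b) monoid_scheme \<Rightarrow> bool" where
  "two_step_nilpotent G \<longleftrightarrow> group G \<and>
     (\<forall>a \<in> carrier G. \<forall>b \<in> carrier G. \<forall>x \<in> carrier G.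
        commutator G a b \<otimes>\<^bsub>G\<^esub> x = x \<otimes>\<^bsub>G\<^esub> commutator G a b)"

end

theory Submission
  imports Defs
begin

context group
begin

lemma cancel_aux [simp]:
  "g \<in> carrier G \<Longrightarrow> z \<in> carrier G \<Longrightarrow> g \<otimes> (inv g \<otimes> z) = z"
  "g \<in> carrier G \<Longrightarrow> z \<in> carrier G \<Longrightarrow> inv g \<otimes> (g \<otimes> z) = z"
  by (simp_all add: m_assoc[symmetric])

lemma conj_iso:
  assumes g: "g \<in> carrier G"
  shows "(\<lambda>b. inv g \<otimes> b \<otimes> g) \<in> iso G G"
proof -
  have hom: "(\<lambda>b. inv g \<otimes> b \<otimes> g) \<in> hom G G"
  proof (rule homI)
    fix x y assume x: "x \<in> carrier G" and y: "y \<in> carrier G"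
    show "inv g \<otimes> x \<otimes> g \<in> carrier G" using g x by simp
    have "inv g \<otimes> (x \<otimes> y) \<otimes> g = inv g \<otimes> x \<otimes> (g \<otimes> inv g) \<otimes> y \<otimes> g"
      using g x y by (simp add: m_assoc)
    also have "\<dots> = inv g \<otimes> x \<otimes> g \<otimes> (inv g \<otimes> y \<otimes> g)"
      using g x y by (simp add: m_assoc)
    finally show "inv g \<otimes> (x \<otimes> y) \<otimes> g = inv g \<otimes> x \<otimes> g \<otimes> (inv g \<otimes> y \<otimes> g)" .
  qed
  have inj: "inj_on (\<lambda>b. inv g \<otimes> b \<otimes> g) (carrier G)"
  proof (rule inj_onI)
    fix x y assume x: "x \<in> carrier G" and y: "y \<in> carrier G"
      and e: "inv g \<otimes> x \<otimes> g = inv g \<otimes> y \<otimes> g"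
    then have "inv g \<otimes> x = inv g \<otimes> y" using g by (simp)
    then show "x = y" using g x y by (simp)
  qed
  have surj: "(\<lambda>b. inv g \<otimes> b \<otimes> g) ` carrier G = carrier G"
  proof
    show "(\<lambda>b. inv g \<otimes> b \<otimes> g) ` carrier G \<subseteq> carrier G" using g by auto
    show "carrier G \<subseteq> (\<lambda>b. inv g \<otimes> b \<otimes> g) ` carrier G"
    proof
      fix x assume x: "x \<in> carrier G"
      have "x = inv g \<otimes> (g \<otimes> x \<otimes> inv g) \<otimes> g"
        using g x by (simp add: m_assoc)
      moreover have "g \<otimes> x \<otimes> inv g \<in> carrier G" using g x by simp
      ultimately show "x \<in> (\<lambda>b. inv g \<otimes> b \<otimes> g) ` carrier G" by blast
    qed
  qed
  show ?thesis using hom inj surj by (simp add: iso_iff)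
qed

lemma part1:
  assumes a: "a \<in> carrier G" and b: "b \<in> carrier G" and c: "c \<in> carrier G"
  shows "inv a \<otimes> (inv b \<otimes> c \<otimes> b) \<otimes> a =
    inv (a \<otimes> (inv a \<otimes> b \<otimes> a)) \<otimes> c \<otimes> (a \<otimes> (inv a \<otimes> b \<otimes> a))"
proof -
  have "a \<otimes> (inv a \<otimes> b \<otimes> a) = b \<otimes> a" using a b by (simp add: m_assoc[symmetric])
  then show ?thesis using a b c by (simp add: inv_mult_group m_assoc)
qed


lemma part2:
  fixes n :: int
  assumes cen: "\<And>a b x. a \<in> carrier G \<Longrightarrow> b \<in> carrier G \<Longrightarrow> x \<in> carrier G \<Longrightarrow>
     (inv a \<otimes> inv b \<otimes> a \<otimes> b) \<otimes> x = x \<otimes> (inv a \<otimes> inv b \<otimes> a \<otimes> b)"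
  assumes a: "a \<in> carrier G" and b: "b \<in> carrier G" and c: "c \<in> carrier G"
  shows "a [^] (- n) \<otimes> (b [^] (- n) \<otimes> c \<otimes> b [^] n) \<otimes> a [^] n =
    (a \<otimes> (a [^] (- n) \<otimes> b \<otimes> a [^] n)) [^] (- n) \<otimes> c \<otimes> (a \<otimes> (a [^] (- n) \<otimes> b \<otimes> a [^] n)) [^] n"
proof -
  define f where "f x = inv x \<otimes> c \<otimes> x \<otimes> inv c" for x
  have fc: "f x \<in> carrier G" if "x \<in> carrier G" for x using that c by (simp add: f_def)
  have fcen: "f x \<otimes> y = y \<otimes> f x" if "x \<in> carrier G" "y \<in> carrier G" for x y
    using cen[of x "inv c" y] that c by (simp add: f_def)
  have conj: "inv x \<otimes> c \<otimes> x = f x \<otimes> c" if x: "x \<in> carrier G" for x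
    using x c by (simp add: f_def m_assoc)
  have fmul: "f (x \<otimes> y) = f x \<otimes> f y" if x: "x \<in> carrier G" and y: "y \<in> carrier G" for x y
  proof -
    have "f (x \<otimes> y) = inv y \<otimes> (inv x \<otimes> c \<otimes> x) \<otimes> y \<otimes> inv c"
      using x y c by (simp add: f_def inv_mult_group m_assoc)
    also have "\<dots> = inv y \<otimes> (f x \<otimes> c) \<otimes> y \<otimes> inv c" using conj x by simp
    also have "\<dots> = (inv y \<otimes> f x) \<otimes> (c \<otimes> y \<otimes> inv c)"
      using x y c fc by (simp add: m_assoc)
    also have "\<dots> = (f x \<otimes> inv y) \<otimes> (c \<otimes> y \<otimes> inv c)"
      using fcen[of x "inv y"] x y by simp
    also have "\<dots> = f x \<otimes> f y"
      using x y c fc by (simp add: f_def m_assoc)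
    finally show ?thesis .
  qed
  have fhom: "f \<in> hom G G" by (rule homI) (auto simp: fc fmul)
  have fpow: "f (x [^] (m::int)) = f x [^] m" if "x \<in> carrier G" for x m
    using hom_int_pow[OF fhom that] is_group by simp
  have finv: "f (inv x) \<otimes> f x = \<one>" if x: "x \<in> carrier G" for x
  proof -
    have "f (inv x) \<otimes> f x = f (inv x \<otimes> x)" using fmul[of "inv x" x] x by simp
    also have "\<dots> = \<one>" using x c by (simp add: f_def)
    finally show ?thesis .
  qed
  define an where "an = a [^] n"
  define bn where "bn = b [^] n"
  have an: "an \<in> carrier G" and bn: "bn \<in> carrier G" using a b by (auto simp: an_def bn_def)
  have ani: "a [^] (- n) = inv an" using a by (simp add: an_def int_pow_neg)
  define d where "d = a \<otimes> (inv an \<otimes> b \<otimes> an)"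
  have d: "d \<in> carrier G" using a b an by (simp add: d_def)
  have fd: "f d = f a \<otimes> f b"
  proof -
    have "f d = f a \<otimes> (f (inv an) \<otimes> f b \<otimes> f an)" using a b an by (simp add: d_def fmul)
    also have "\<dots> = f a \<otimes> (f b \<otimes> (f (inv an) \<otimes> f an))"
      using fcen[of "inv an" "f b"] a b an fc by (simp add: m_assoc)
    also have "\<dots> = f a \<otimes> f b" using finv an fc b by simp
    finally show ?thesis .
  qed
  have "f (d [^] n) = f (bn \<otimes> an)"
  proof -
    have "f (d [^] n) = (f a \<otimes> f b) [^] n" using fpow d fd by simp
    also have "\<dots> = f a [^] n \<otimes> f b [^] n"
      using int_pow_mult_distrib[OF fcen[of a "f b"]] a b fc by simp
    also have "\<dots> = f an \<otimes> f bn" using fpow a b by (simp add: an_def bn_def)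
    also have "\<dots> = f bn \<otimes> f an" using fcen[of an "f bn"] an bn fc by simp
    also have "\<dots> = f (bn \<otimes> an)" using fmul an bn by simp
    finally show ?thesis .
  qed
  note fdn = this
  have L: "a [^] (- n) \<otimes> (b [^] (- n) \<otimes> c \<otimes> b [^] n) \<otimes> a [^] n = inv an \<otimes> (inv bn \<otimes> c \<otimes> bn) \<otimes> an"
    using a b by (simp add: an_def bn_def int_pow_neg)
  have R: "(a \<otimes> (a [^] (- n) \<otimes> b \<otimes> a [^] n)) [^] (- n) \<otimes> c \<otimes> (a \<otimes> (a [^] (- n) \<otimes> b \<otimes> a [^] n)) [^] n
     = inv (d [^] n) \<otimes> c \<otimes> d [^] n"
    using d by (simp add: d_def ani an_def int_pow_neg)
  have "inv an \<otimes> (inv bn \<otimes> c \<otimes> bn) \<otimes> an = inv (bn \<otimes> an) \<otimes> c \<otimes> (bn \<otimes> an)"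
    using an bn c by (simp add: inv_mult_group m_assoc)
  also have "\<dots> = f (bn \<otimes> an) \<otimes> c" using conj an bn by simp
  also have "\<dots> = f (d [^] n) \<otimes> c" using fdn by simp
  also have "\<dots> = inv (d [^] n) \<otimes> c \<otimes> d [^] n" using conj d by simp
  finally show ?thesis using L R by simp
qed

end

theorem proposition5p3:
  shows "(\<forall>G :: ('a, 'b) monoid_scheme. group G \<longrightarrow>
            post_group G (\<lambda>a b. inv\<^bsub>G\<^esub> a \<otimes>\<^bsub>G\<^esub> b \<otimes>\<^bsub>G\<^esub> a))
       \<and> (\<forall>(G :: ('a, 'b) monoid_scheme) (n :: int). two_step_nilpotent G \<longrightarrow> n \<noteq> 0 \<longrightarrow>
            post_group G (\<lambda>a b. a [^]\<^bsub>G\<^esub> (- n) \<otimes>\<^bsub>G\<^esub> b \<otimes>\<^bsub>G\<^esub> a [^]\<^bsub>G\<^esub> n))"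
proof (intro conjI allI impI)
  fix G :: "('a, 'b) monoid_scheme"
  assume "group G"
  then interpret group G .
  show "post_group G (\<lambda>a b. inv\<^bsub>G\<^esub> a \<otimes>\<^bsub>G\<^esub> b \<otimes>\<^bsub>G\<^esub> a)"
    unfolding post_group_def using conj_iso part1 is_group by simp
next
  fix G :: "('a, 'b) monoid_scheme" and n :: int
  assume h: "two_step_nilpotent G" and "n \<noteq> 0"
  then interpret group G by (simp add: two_step_nilpotent_def)
  have cen: "\<And>a b x. a \<in> carrier G \<Longrightarrow> b \<in> carrier G \<Longrightarrow> x \<in> carrier G \<Longrightarrow>
     (inv\<^bsub>G\<^esub> a \<otimes>\<^bsub>G\<^esub> inv\<^bsub>G\<^esub> b \<otimes>\<^bsub>G\<^esub> a \<otimes>\<^bsub>G\<^esub> b) \<otimes>\<^bsub>G\<^esub> x = x \<otimes>\<^bsub>G\<^esub> (inv\<^bsub>G\<^esub> a \<otimes>\<^bsub>G\<^esub> inv\<^bsub>G\<^esub> b \<otimes>\<^bsub>G\<^esub> a \<otimes>\<^bsub>G\<^esub> b)"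
    using h by (simp add: two_step_nilpotent_def commutator_def)
  have iso: "(\<lambda>b. a [^]\<^bsub>G\<^esub> (- n) \<otimes>\<^bsub>G\<^esub> b \<otimes>\<^bsub>G\<^esub> a [^]\<^bsub>G\<^esub> n) \<in> iso G G" if a: "a \<in> carrier G" for a
    using conj_iso[of "a [^]\<^bsub>G\<^esub> n"] a by (simp add: int_pow_neg)
  show "post_group G (\<lambda>a b. a [^]\<^bsub>G\<^esub> (- n) \<otimes>\<^bsub>G\<^esub> b \<otimes>\<^bsub>G\<^esub> a [^]\<^bsub>G\<^esub> n)"
    unfolding post_group_def using iso part2[OF cen] is_group by simp
qed

end
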